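(* Let $\mathcal{C}$ be a bicomplete category and let $\mathscr{E}'$ be the totally ordered category with three objects $\varnothing\to E\to *$. Let $F:\mathcal{C}\to\mathscr{E}'$ be any functor. Then the following defines a model structure $\mathbb{C}^F$ on $\mathcal{C}$: \[\mathbb{C}^F_{cof}=\{A\to B : F(B)\neq\varnothing\}\cup\mathrm{iso}\,\mathcal{C},\qquad \mathbb{C}^F_{fib}=\{X\to Y : F(X)\neq *\}\cup\mathrm{iso}\,\mathcal{C},\] \[\mathbb{C}^F_{we}=\{f : F(f)=1_\varnothing \text{ or } F(f)=1_*\}\cup\mathrm{iso}\,\mathcal{C}.\]
   Context: Bicomplete means having all finite limits and finite colimits; $\mathrm{iso}\,\mathcal{C}$ denotes the isomorphisms of $\mathcal{C}$. A model structure is a triple (weak equivalences, cofibrations, fibrations) of subcategories such that (cof, fib $\cap$ we) and (cof $\cap$ we, fib) are weak factorization systems (pairs $(\mathcal{L},\mathcal{R})$ with $\mathcal{L}$ = maps with left lifting property against $\mathcal{R}$, $\mathcal{R}$ = maps with right lifting property against $\mathcal{L}$, and every map factoring as an $\mathcal{L}$-map followed by an $\mathcal{R}$-map), and weak equivalences satisfy two-out-of-three. *)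

theory Defs
  imports Main
begin

record ('o, 'a) category =
  cobj  :: "'o set"
  carr  :: "'a set"
  cdom  :: "'a \<Rightarrow> 'o"
  ccod  :: "'a \<Rightarrow> 'o"
  cid   :: "'o \<Rightarrow> 'a"
  ccomp :: "'a \<Rightarrow> 'a \<Rightarrow> 'a"   (* ccomp C g f = g o f *)

definition category :: "('o, 'a) category \<Rightarrow> bool" where
  "category C \<longleftrightarrow>
     (\<forall>f\<in>carr C. cdom C f \<in> cobj C \<and> ccod C f \<in> cobj C) \<and>
     (\<forall>x\<in>cobj C. cid C x \<in> carr C \<and> cdom C (cid C x) = x \<and> ccod C (cid C x) = x) \<and>
     (\<forall>f\<in>carr C. \<forall>g\<in>carr C. ccod C f = cdom C g \<longrightarrow>
        ccomp C g f \<in> carr C \<and> cdom C (ccomp C g f) = cdom C f \<and> ccod C (ccomp C g f) = ccod C g) \<and>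
     (\<forall>f\<in>carr C. ccomp C f (cid C (cdom C f)) = f \<and> ccomp C (cid C (ccod C f)) f = f) \<and>
     (\<forall>f\<in>carr C. \<forall>g\<in>carr C. \<forall>h\<in>carr C. ccod C f = cdom C g \<and> ccod C g = cdom C h \<longrightarrow>
        ccomp C h (ccomp C g f) = ccomp C (ccomp C h g) f)"

definition hom :: "('o, 'a) category \<Rightarrow> 'o \<Rightarrow> 'o \<Rightarrow> 'a set" where
  "hom C x y = {f \<in> carr C. cdom C f = x \<and> ccod C f = y}"

definition iso :: "('o, 'a) category \<Rightarrow> 'a set" where
  "iso C = {f \<in> carr C. \<exists>g \<in> hom C (ccod C f) (cdom C f).
              ccomp C g f = cid C (cdom C f) \<and> ccomp C f g = cid C (ccod C f)}"

definition "functor" :: "('o, 'a) category \<Rightarrow> ('p, 'b) category \<Rightarrow> ('o \<Rightarrow> 'p) \<Rightarrow> ('a \<Rightarrow> 'b) \<Rightarrow> bool" where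
  "functor C D F0 F1 \<longleftrightarrow>
     (\<forall>x\<in>cobj C. F0 x \<in> cobj D) \<and>
     (\<forall>f\<in>carr C. F1 f \<in> hom D (F0 (cdom C f)) (F0 (ccod C f))) \<and>
     (\<forall>x\<in>cobj C. F1 (cid C x) = cid D (F0 x)) \<and>
     (\<forall>f\<in>carr C. \<forall>g\<in>carr C. ccod C f = cdom C g \<longrightarrow> F1 (ccomp C g f) = ccomp D (F1 g) (F1 f))"

text \<open>Finite diagrams are indexed by finite categories whose objects and arrows are natural
numbers; every finite category is isomorphic to such a one.\<close>

definition cone :: "('o, 'a) category \<Rightarrow> (nat, nat) category \<Rightarrow> (nat \<Rightarrow> 'o) \<Rightarrow> (nat \<Rightarrow> 'a)
                     \<Rightarrow> 'o \<Rightarrow> (nat \<Rightarrow> 'a) \<Rightarrow> bool" where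
  "cone C J D0 D1 L \<pi> \<longleftrightarrow> L \<in> cobj C \<and>
     (\<forall>j\<in>cobj J. \<pi> j \<in> hom C L (D0 j)) \<and>
     (\<forall>u\<in>carr J. ccomp C (D1 u) (\<pi> (cdom J u)) = \<pi> (ccod J u))"

definition is_limit :: "('o, 'a) category \<Rightarrow> (nat, nat) category \<Rightarrow> (nat \<Rightarrow> 'o) \<Rightarrow> (nat \<Rightarrow> 'a)
                     \<Rightarrow> 'o \<Rightarrow> (nat \<Rightarrow> 'a) \<Rightarrow> bool" where
  "is_limit C J D0 D1 L \<pi> \<longleftrightarrow> cone C J D0 D1 L \<pi> \<and>
     (\<forall>L' \<pi>'. cone C J D0 D1 L' \<pi>' \<longrightarrow>
        (\<exists>!h. h \<in> hom C L' L \<and> (\<forall>j\<in>cobj J. ccomp C (\<pi> j) h = \<pi>' j)))"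

definition cocone :: "('o, 'a) category \<Rightarrow> (nat, nat) category \<Rightarrow> (nat \<Rightarrow> 'o) \<Rightarrow> (nat \<Rightarrow> 'a)
                     \<Rightarrow> 'o \<Rightarrow> (nat \<Rightarrow> 'a) \<Rightarrow> bool" where
  "cocone C J D0 D1 L \<iota> \<longleftrightarrow> L \<in> cobj C \<and>
     (\<forall>j\<in>cobj J. \<iota> j \<in> hom C (D0 j) L) \<and>
     (\<forall>u\<in>carr J. ccomp C (\<iota> (ccod J u)) (D1 u) = \<iota> (cdom J u))"

definition is_colimit :: "('o, 'a) category \<Rightarrow> (nat, nat) category \<Rightarrow> (nat \<Rightarrow> 'o) \<Rightarrow> (nat \<Rightarrow> 'a)
                     \<Rightarrow> 'o \<Rightarrow> (nat \<Rightarrow> 'a) \<Rightarrow> bool" where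
  "is_colimit C J D0 D1 L \<iota> \<longleftrightarrow> cocone C J D0 D1 L \<iota> \<and>
     (\<forall>L' \<iota>'. cocone C J D0 D1 L' \<iota>' \<longrightarrow>
        (\<exists>!h. h \<in> hom C L L' \<and> (\<forall>j\<in>cobj J. ccomp C h (\<iota> j) = \<iota>' j)))"

definition finite_category :: "(nat, nat) category \<Rightarrow> bool" where
  "finite_category J \<longleftrightarrow> category J \<and> finite (cobj J) \<and> finite (carr J)"

definition bicomplete :: "('o, 'a) category \<Rightarrow> bool" where
  "bicomplete C \<longleftrightarrow>
     (\<forall>J D0 D1. finite_category J \<and> functor J C D0 D1 \<longrightarrow> (\<exists>L \<pi>. is_limit C J D0 D1 L \<pi>)) \<and>
     (\<forall>J D0 D1. finite_category J \<and> functor J C D0 D1 \<longrightarrow> (\<exists>L \<iota>. is_colimit C J D0 D1 L \<iota>))"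

definition lifts :: "('o, 'a) category \<Rightarrow> 'a \<Rightarrow> 'a \<Rightarrow> bool" where
  "lifts C i p \<longleftrightarrow>
     (\<forall>u v. u \<in> hom C (cdom C i) (cdom C p) \<and> v \<in> hom C (ccod C i) (ccod C p) \<and>
            ccomp C p u = ccomp C v i \<longrightarrow>
        (\<exists>h \<in> hom C (ccod C i) (cdom C p). ccomp C h i = u \<and> ccomp C p h = v))"

definition wfs :: "('o, 'a) category \<Rightarrow> 'a set \<Rightarrow> 'a set \<Rightarrow> bool" where
  "wfs C L R \<longleftrightarrow> L \<subseteq> carr C \<and> R \<subseteq> carr C \<and>
     L = {i \<in> carr C. \<forall>p\<in>R. lifts C i p} \<and>
     R = {p \<in> carr C. \<forall>i\<in>L. lifts C i p} \<and>
     (\<forall>f\<in>carr C. \<exists>i\<in>L. \<exists>p\<in>R. ccod C i = cdom C p \<and> ccomp C p i = f)"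

definition subcategory :: "('o, 'a) category \<Rightarrow> 'a set \<Rightarrow> bool" where
  "subcategory C S \<longleftrightarrow> S \<subseteq> carr C \<and> (\<forall>x\<in>cobj C. cid C x \<in> S) \<and>
     (\<forall>f\<in>S. \<forall>g\<in>S. ccod C f = cdom C g \<longrightarrow> ccomp C g f \<in> S)"

definition two_out_of_three :: "('o, 'a) category \<Rightarrow> 'a set \<Rightarrow> bool" where
  "two_out_of_three C W \<longleftrightarrow>
     (\<forall>f\<in>carr C. \<forall>g\<in>carr C. ccod C f = cdom C g \<longrightarrow>
        ((f \<in> W \<and> g \<in> W \<longrightarrow> ccomp C g f \<in> W) \<and>
         (f \<in> W \<and> ccomp C g f \<in> W \<longrightarrow> g \<in> W) \<and>
         (g \<in> W \<and> ccomp C g f \<in> W \<longrightarrow> f \<in> W)))"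

definition model_structure :: "('o, 'a) category \<Rightarrow> 'a set \<Rightarrow> 'a set \<Rightarrow> 'a set \<Rightarrow> bool" where
  "model_structure C We Cof Fib \<longleftrightarrow>
     subcategory C We \<and> subcategory C Cof \<and> subcategory C Fib \<and>
     wfs C Cof (Fib \<inter> We) \<and> wfs C (Cof \<inter> We) Fib \<and>
     two_out_of_three C We"

datatype E3 = Empty | Emid | Star

fun rank3 :: "E3 \<Rightarrow> nat" where
  "rank3 Empty = 0" | "rank3 Emid = 1" | "rank3 Star = 2"

definition Eprime :: "(E3, E3 \<times> E3) category" where
  "Eprime = \<lparr> cobj = UNIV, carr = {(a, b). rank3 a \<le> rank3 b},
              cdom = fst, ccod = snd, cid = (\<lambda>x. (x, x)),
              ccomp = (\<lambda>g f. (fst f, snd g)) \<rparr>"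

end

theory Submission
  imports Defs
begin

lemma cat_dest:
  assumes "category C"
  shows "\<And>f. f\<in>carr C \<Longrightarrow> cdom C f \<in> cobj C \<and> ccod C f \<in> cobj C"
    and "\<And>x. x\<in>cobj C \<Longrightarrow> cid C x \<in> carr C \<and> cdom C (cid C x) = x \<and> ccod C (cid C x) = x"
    and "\<And>f g. f\<in>carr C \<Longrightarrow> g\<in>carr C \<Longrightarrow> ccod C f = cdom C g \<Longrightarrow>
        ccomp C g f \<in> carr C \<and> cdom C (ccomp C g f) = cdom C f \<and> ccod C (ccomp C g f) = ccod C g"
    and "\<And>f. f\<in>carr C \<Longrightarrow> ccomp C f (cid C (cdom C f)) = f \<and> ccomp C (cid C (ccod C f)) f = f"
    and "\<And>f g h. f\<in>carr C \<Longrightarrow> g\<in>carr C \<Longrightarrow> h\<in>carr C \<Longrightarrow> ccod C f = cdom C g \<Longrightarrow> ccod C g = cdom C h \<Longrightarrow>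
        ccomp C h (ccomp C g f) = ccomp C (ccomp C h g) f"
  using assms unfolding category_def by blast+

lemma isoI:
  assumes "f \<in> carr C" "g \<in> carr C" "cdom C g = ccod C f" "ccod C g = cdom C f"
    "ccomp C g f = cid C (cdom C f)" "ccomp C f g = cid C (ccod C f)"
  shows "f \<in> iso C"
  using assms unfolding iso_def hom_def by auto

lemma isoE:
  assumes "f \<in> iso C"
  obtains g where "f \<in> carr C" "g \<in> carr C" "cdom C g = ccod C f" "ccod C g = cdom C f"
    "ccomp C g f = cid C (cdom C f)" "ccomp C f g = cid C (ccod C f)"
  using assms unfolding iso_def hom_def by auto

lemma iso_inv:
  assumes "f \<in> carr C" "g \<in> carr C" "cdom C g = ccod C f" "ccod C g = cdom C f"
    "ccomp C g f = cid C (cdom C f)" "ccomp C f g = cid C (ccod C f)"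
  shows "g \<in> iso C"
  using assms by (intro isoI[of g C f]) auto

lemma iso_comp:
  assumes C: "category C" and f: "f \<in> iso C" and g: "g \<in> iso C" and e: "ccod C f = cdom C g"
  shows "ccomp C g f \<in> iso C"
proof -
  obtain f' where f': "f \<in> carr C" "f' \<in> carr C" "cdom C f' = ccod C f" "ccod C f' = cdom C f"
    "ccomp C f' f = cid C (cdom C f)" "ccomp C f f' = cid C (ccod C f)" using f by (rule isoE)
  obtain g' where g': "g \<in> carr C" "g' \<in> carr C" "cdom C g' = ccod C g" "ccod C g' = cdom C g"
    "ccomp C g' g = cid C (cdom C g)" "ccomp C g g' = cid C (ccod C g)" using g by (rule isoE)
  note D = cat_dest[OF C]
  have gf: "ccomp C g f \<in> carr C" "cdom C (ccomp C g f) = cdom C f" "ccod C (ccomp C g f) = ccod C g"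
    using D(3)[OF f'(1) g'(1) e] by auto
  have fg': "ccomp C f' g' \<in> carr C" "cdom C (ccomp C f' g') = ccod C g" "ccod C (ccomp C f' g') = cdom C f"
    using D(3)[OF g'(2) f'(2)] e f' g' by auto
  have "ccomp C (ccomp C f' g') (ccomp C g f) = ccomp C f' (ccomp C g' (ccomp C g f))"
    using D(5)[OF gf(1) g'(2) f'(2)] gf g' f' e by simp
  also have "ccomp C g' (ccomp C g f) = ccomp C (ccomp C g' g) f"
    using D(5)[OF f'(1) g'(1) g'(2)] e g' by simp
  also have "\<dots> = f" using g'(5) e[symmetric] D(4)[OF f'(1)] by simp
  finally have 1: "ccomp C (ccomp C f' g') (ccomp C g f) = cid C (cdom C (ccomp C g f))"
    using f' gf by simp
  have "ccomp C (ccomp C g f) (ccomp C f' g') = ccomp C g (ccomp C f (ccomp C f' g'))"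
    using D(5)[OF fg'(1) f'(1) g'(1)] fg' e by simp
  also have "ccomp C f (ccomp C f' g') = ccomp C (ccomp C f f') g'"
    using D(5)[OF g'(2) f'(2) f'(1)] e g' f' by simp
  also have "\<dots> = g'" using f'(6) e g'(4) D(4)[OF g'(2)] by simp
  finally have 2: "ccomp C (ccomp C g f) (ccomp C f' g') = cid C (ccod C (ccomp C g f))"
    using g' gf by simp
  show ?thesis using isoI[OF gf(1) fg'(1) _ _ 1 2] gf fg' by simp
qed

lemma iso_cancel_right:
  assumes C: "category C" and f: "f \<in> iso C" and g: "g \<in> carr C" and e: "ccod C f = cdom C g"
    and gf: "ccomp C g f \<in> iso C"
  shows "g \<in> iso C"
proof -
  obtain f' where f': "f \<in> carr C" "f' \<in> carr C" "cdom C f' = ccod C f" "ccod C f' = cdom C f"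
    "ccomp C f' f = cid C (cdom C f)" "ccomp C f f' = cid C (ccod C f)" using f by (rule isoE)
  note D = cat_dest[OF C]
  have f'i: "f' \<in> iso C" using iso_inv[OF f'] .
  have "ccomp C (ccomp C g f) f' = ccomp C g (ccomp C f f')"
    using D(5)[OF f'(2) f'(1) g] f' e by simp
  also have "\<dots> = g" using f'(6) e D(4)[OF g] by simp
  finally have eq: "ccomp C (ccomp C g f) f' = g" .
  have "ccomp C (ccomp C g f) f' \<in> iso C"
    using iso_comp[OF C f'i gf] D(3)[OF f'(1) g e] f' by simp
  thus ?thesis using eq by simp
qed

lemma iso_cancel_left:
  assumes C: "category C" and f: "f \<in> carr C" and g: "g \<in> iso C" and e: "ccod C f = cdom C g"
    and gf: "ccomp C g f \<in> iso C"
  shows "f \<in> iso C"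
proof -
  obtain g' where g': "g \<in> carr C" "g' \<in> carr C" "cdom C g' = ccod C g" "ccod C g' = cdom C g"
    "ccomp C g' g = cid C (cdom C g)" "ccomp C g g' = cid C (ccod C g)" using g by (rule isoE)
  note D = cat_dest[OF C]
  have g'i: "g' \<in> iso C" using iso_inv[OF g'] .
  have "ccomp C g' (ccomp C g f) = ccomp C (ccomp C g' g) f"
    using D(5)[OF f g'(1) g'(2)] g' e by simp
  also have "\<dots> = f" using g'(5) e[symmetric] D(4)[OF f] by simp
  finally have eq: "ccomp C g' (ccomp C g f) = f" .
  have "ccomp C g' (ccomp C g f) \<in> iso C"
    using iso_comp[OF C gf g'i] D(3)[OF f g'(1) e] g' by simp
  thus ?thesis using eq by simp
qed

lemma self_lift:
  assumes C: "category C" and f: "f \<in> carr C" and l: "lifts C f f"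
  shows "f \<in> iso C"
proof -
  note D = cat_dest[OF C]
  have u: "cid C (cdom C f) \<in> hom C (cdom C f) (cdom C f)" using D(1)[OF f] D(2) unfolding hom_def by auto
  have v: "cid C (ccod C f) \<in> hom C (ccod C f) (ccod C f)" using D(1)[OF f] D(2) unfolding hom_def by auto
  have "ccomp C f (cid C (cdom C f)) = ccomp C (cid C (ccod C f)) f" using D(4)[OF f] by simp
  then obtain h where "h \<in> hom C (ccod C f) (cdom C f)" "ccomp C h f = cid C (cdom C f)"
    "ccomp C f h = cid C (ccod C f)" using l u v unfolding lifts_def by blast
  thus ?thesis using f unfolding iso_def by auto
qed

lemma iso_lifts_left:
  assumes C: "category C" and i: "i \<in> iso C" and p: "p \<in> carr C"
  shows "lifts C i p"
  unfolding lifts_def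
proof (intro allI impI)
  fix u v assume a: "u \<in> hom C (cdom C i) (cdom C p) \<and> v \<in> hom C (ccod C i) (ccod C p) \<and>
            ccomp C p u = ccomp C v i"
  obtain i' where i': "i \<in> carr C" "i' \<in> carr C" "cdom C i' = ccod C i" "ccod C i' = cdom C i"
    "ccomp C i' i = cid C (cdom C i)" "ccomp C i i' = cid C (ccod C i)" using i by (rule isoE)
  note D = cat_dest[OF C]
  have u: "u \<in> carr C" "cdom C u = cdom C i" "ccod C u = cdom C p"
   and v: "v \<in> carr C" "cdom C v = ccod C i" "ccod C v = ccod C p" using a unfolding hom_def by auto
  define h where "h = ccomp C u i'"
  have h: "h \<in> carr C" "cdom C h = ccod C i" "ccod C h = cdom C p"
    using D(3)[OF i'(2) u(1)] i' u unfolding h_def by auto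
  have "ccomp C h i = ccomp C u (ccomp C i' i)" unfolding h_def
    using D(5)[OF i'(1) i'(2) u(1)] i' u by simp
  also have "\<dots> = u" using i'(5) u D(4)[OF u(1)] by simp
  finally have 1: "ccomp C h i = u" .
  have "ccomp C p h = ccomp C (ccomp C p u) i'" unfolding h_def
    using D(5)[OF i'(2) u(1) p] i' u by simp
  also have "\<dots> = ccomp C (ccomp C v i) i'" using a by simp
  also have "\<dots> = ccomp C v (ccomp C i i')"
    using D(5)[OF i'(2) i'(1) v(1)] i' v by simp
  also have "\<dots> = v" using i'(6) v D(4)[OF v(1)] by simp
  finally have 2: "ccomp C p h = v" .
  show "\<exists>h\<in>hom C (ccod C i) (cdom C p). ccomp C h i = u \<and> ccomp C p h = v"
    using h 1 2 unfolding hom_def by auto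
qed

lemma iso_lifts_right:
  assumes C: "category C" and i: "i \<in> carr C" and p: "p \<in> iso C"
  shows "lifts C i p"
  unfolding lifts_def
proof (intro allI impI)
  fix u v assume a: "u \<in> hom C (cdom C i) (cdom C p) \<and> v \<in> hom C (ccod C i) (ccod C p) \<and>
            ccomp C p u = ccomp C v i"
  obtain p' where p': "p \<in> carr C" "p' \<in> carr C" "cdom C p' = ccod C p" "ccod C p' = cdom C p"
    "ccomp C p' p = cid C (cdom C p)" "ccomp C p p' = cid C (ccod C p)" using p by (rule isoE)
  note D = cat_dest[OF C]
  have u: "u \<in> carr C" "cdom C u = cdom C i" "ccod C u = cdom C p"
   and v: "v \<in> carr C" "cdom C v = ccod C i" "ccod C v = ccod C p" using a unfolding hom_def by auto
  define h where "h = ccomp C p' v"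
  have h: "h \<in> carr C" "cdom C h = ccod C i" "ccod C h = cdom C p"
    using D(3)[OF v(1) p'(2)] p' v unfolding h_def by auto
  have "ccomp C h i = ccomp C p' (ccomp C v i)" unfolding h_def
    using D(5)[OF i v(1) p'(2)] p' v by simp
  also have "\<dots> = ccomp C p' (ccomp C p u)" using a by simp
  also have "\<dots> = ccomp C (ccomp C p' p) u"
    using D(5)[OF u(1) p'(1) p'(2)] p' u by simp
  also have "\<dots> = u" using p'(5) u D(4)[OF u(1)] by simp
  finally have 1: "ccomp C h i = u" .
  have "ccomp C p h = ccomp C (ccomp C p p') v" unfolding h_def
    using D(5)[OF v(1) p'(2) p'(1)] p' v by simp
  also have "\<dots> = v" using p'(6) v D(4)[OF v(1)] by simp
  finally have 2: "ccomp C p h = v" .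
  show "\<exists>h\<in>hom C (ccod C i) (cdom C p). ccomp C h i = u \<and> ccomp C p h = v"
    using h 1 2 unfolding hom_def by auto
qed

lemma F1_eq:
  assumes "functor C Eprime F0 F1" "f \<in> carr C"
  shows "F1 f = (F0 (cdom C f), F0 (ccod C f))" "rank3 (F0 (cdom C f)) \<le> rank3 (F0 (ccod C f))"
  using assms unfolding functor_def hom_def Eprime_def by auto

lemma rank3_inj: "rank3 a = rank3 b \<Longrightarrow> a = b"
  by (cases a; cases b; simp)

lemma iso_F0:
  assumes "functor C Eprime F0 F1" "f \<in> iso C"
  shows "F0 (cdom C f) = F0 (ccod C f)"
proof -
  obtain g where g: "f \<in> carr C" "g \<in> carr C" "cdom C g = ccod C f" "ccod C g = cdom C f"
    "ccomp C g f = cid C (cdom C f)" "ccomp C f g = cid C (ccod C f)" using assms(2) by (rule isoE)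
  show ?thesis using F1_eq(2)[OF assms(1) g(1)] F1_eq(2)[OF assms(1) g(2)] g(3,4)
    by (intro rank3_inj) simp
qed

lemma hom_F0:
  assumes "functor C Eprime F0 F1" "f \<in> hom C x y"
  shows "rank3 (F0 x) \<le> rank3 (F0 y)"
  using assms F1_eq(2)[OF assms(1)] unfolding hom_def by auto

lemma id_iso:
  assumes C: "category C" and x: "x \<in> cobj C"
  shows "cid C x \<in> iso C"
proof -
  note D = cat_dest[OF C]
  have i: "cid C x \<in> carr C" "cdom C (cid C x) = x" "ccod C (cid C x) = x" using D(2)[OF x] by auto
  have "ccomp C (cid C x) (cid C x) = cid C x" using D(4)[OF i(1)] i by simp
  thus ?thesis using isoI[OF i(1) i(1)] i by simp
qed

lemma iso_carr: "iso C \<subseteq> carr C" unfolding iso_def by auto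

lemma wfs_gen:
  assumes C: "category C" and P: "P \<subseteq> carr C" and Q: "Q \<subseteq> carr C"
    and lift: "\<And>i p. i \<in> P \<Longrightarrow> p \<in> Q \<Longrightarrow> lifts C i p"
    and cov: "\<And>f. f \<in> carr C \<Longrightarrow> f \<in> P \<or> f \<in> Q"
  shows "wfs C (P \<union> iso C) (Q \<union> iso C)"
proof -
  note D = cat_dest[OF C]
  have L: "P \<union> iso C = {i \<in> carr C. \<forall>p\<in>Q \<union> iso C. lifts C i p}"
  proof (intro equalityI subsetI)
    fix i assume "i \<in> P \<union> iso C"
    thus "i \<in> {i \<in> carr C. \<forall>p\<in>Q \<union> iso C. lifts C i p}"
      using P Q iso_carr[of C] lift iso_lifts_left[OF C] iso_lifts_right[OF C] by blast
  next
    fix i assume a: "i \<in> {i \<in> carr C. \<forall>p\<in>Q \<union> iso C. lifts C i p}"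
    show "i \<in> P \<union> iso C"
    proof (cases "i \<in> P")
      case False
      then have "i \<in> Q" using cov a by blast
      then have "lifts C i i" using a by blast
      then show ?thesis using self_lift[OF C] a by blast
    qed simp
  qed
  have R: "Q \<union> iso C = {p \<in> carr C. \<forall>i\<in>P \<union> iso C. lifts C i p}"
  proof (intro equalityI subsetI)
    fix p assume "p \<in> Q \<union> iso C"
    thus "p \<in> {p \<in> carr C. \<forall>i\<in>P \<union> iso C. lifts C i p}"
      using P Q iso_carr[of C] lift iso_lifts_left[OF C] iso_lifts_right[OF C] by blast
  next
    fix p assume a: "p \<in> {p \<in> carr C. \<forall>i\<in>P \<union> iso C. lifts C i p}"
    show "p \<in> Q \<union> iso C"
    proof (cases "p \<in> Q")
      case False
      then have "p \<in> P" using cov a by blast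
      then have "lifts C p p" using a by blast
      then show ?thesis using self_lift[OF C] a by blast
    qed simp
  qed
  have fac: "\<exists>i\<in>P \<union> iso C. \<exists>p\<in>Q \<union> iso C. ccod C i = cdom C p \<and> ccomp C p i = f"
    if f: "f \<in> carr C" for f
  proof (cases "f \<in> P")
    case True
    have "cid C (ccod C f) \<in> iso C" using id_iso[OF C] D(1)[OF f] by blast
    moreover have "ccod C f = cdom C (cid C (ccod C f))" using D(2) D(1)[OF f] by simp
    ultimately show ?thesis using True D(4)[OF f] by blast
  next
    case False
    then have q: "f \<in> Q" using cov f by blast
    have "cid C (cdom C f) \<in> iso C" using id_iso[OF C] D(1)[OF f] by blast
    moreover have "ccod C (cid C (cdom C f)) = cdom C f" using D(2) D(1)[OF f] by simp
    ultimately show ?thesis using q D(4)[OF f] by blast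
  qed
  show ?thesis unfolding wfs_def using L R fac P Q iso_carr[of C] by blast
qed


theorem proposition4:
  fixes C :: "('o, 'a) category"
    and F0 :: "'o \<Rightarrow> E3" and F1 :: "'a \<Rightarrow> E3 \<times> E3"
  assumes "category C"
    and "bicomplete C"
    and "functor C Eprime F0 F1"
  shows "model_structure C
           ({f \<in> carr C. F1 f = cid Eprime Empty \<or> F1 f = cid Eprime Star} \<union> iso C)
           ({f \<in> carr C. F0 (ccod C f) \<noteq> Empty} \<union> iso C)
           ({f \<in> carr C. F0 (cdom C f) \<noteq> Star} \<union> iso C)"
proof -
  note C = assms(1) and Fn = assms(3)
  note D = cat_dest[OF C]
  define d where "d f = F0 (cdom C f)" for f
  define c where "c f = F0 (ccod C f)" for f
  have W: "{f \<in> carr C. F1 f = cid Eprime Empty \<or> F1 f = cid Eprime Star} =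
      {f \<in> carr C. d f = c f \<and> (d f = Empty \<or> d f = Star)}"
    using F1_eq(1)[OF Fn] unfolding d_def c_def Eprime_def by auto
  have rk: "rank3 (d f) \<le> rank3 (c f)" if "f \<in> carr C" for f
    using F1_eq(2)[OF Fn that] unfolding d_def c_def .
  have ord1: "c f = Empty \<Longrightarrow> d f = Empty" if "f \<in> carr C" for f
    using rk[OF that] by (cases "d f"; cases "c f") auto
  have ord2: "d f = Star \<Longrightarrow> c f = Star" if "f \<in> carr C" for f
    using rk[OF that] by (cases "d f"; cases "c f") auto
  have isoF: "d f = c f" if "f \<in> iso C" for f
    using iso_F0[OF Fn that] unfolding d_def c_def .
  have comp: "ccomp C g f \<in> carr C \<and> d (ccomp C g f) = d f \<and> c (ccomp C g f) = c g"
    if "f \<in> carr C" "g \<in> carr C" "ccod C f = cdom C g" for f g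
    using D(3)[OF that] unfolding d_def c_def by simp
  have dc: "c f = d g" if "ccod C f = cdom C g" for f g using that unfolding d_def c_def by simp
  define We where "We = {f \<in> carr C. d f = c f \<and> (d f = Empty \<or> d f = Star)} \<union> iso C"
  define Cf where "Cf = {f \<in> carr C. c f \<noteq> Empty} \<union> iso C"
  define Fb where "Fb = {f \<in> carr C. d f \<noteq> Star} \<union> iso C"
  have ic: "iso C \<subseteq> carr C" by (rule iso_carr)
  have idi: "cid C x \<in> iso C" if "x \<in> cobj C" for x using id_iso[OF C that] .
  have sW: "subcategory C We" unfolding subcategory_def
  proof (intro conjI ballI impI)
    show "We \<subseteq> carr C" using ic unfolding We_def by blast
    show "cid C x \<in> We" if "x \<in> cobj C" for x using idi[OF that] unfolding We_def by blast
    fix f g assume f: "f \<in> We" and g: "g \<in> We" and e: "ccod C f = cdom C g"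
    have fc: "f \<in> carr C" "g \<in> carr C" using f g ic unfolding We_def by blast+
    show "ccomp C g f \<in> We"
    proof (cases "f \<in> iso C \<and> g \<in> iso C")
      case True thus ?thesis using iso_comp[OF C _ _ e] unfolding We_def by blast
    next
      case False
      have "d f = c f" "d g = c g" using f g isoF unfolding We_def by blast+
      moreover have "d f = Empty \<or> d f = Star" using False f g isoF dc[OF e] unfolding We_def by auto
      ultimately show ?thesis using comp[OF fc e] dc[OF e] unfolding We_def by auto
    qed
  qed
  have sC: "subcategory C Cf" unfolding subcategory_def
  proof (intro conjI ballI impI)
    show "Cf \<subseteq> carr C" using ic unfolding Cf_def by blast
    show "cid C x \<in> Cf" if "x \<in> cobj C" for x using idi[OF that] unfolding Cf_def by blast
    fix f g assume f: "f \<in> Cf" and g: "g \<in> Cf" and e: "ccod C f = cdom C g"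
    have fc: "f \<in> carr C" "g \<in> carr C" using f g ic unfolding Cf_def by blast+
    show "ccomp C g f \<in> Cf"
    proof (cases "f \<in> iso C \<and> g \<in> iso C")
      case True thus ?thesis using iso_comp[OF C _ _ e] unfolding Cf_def by blast
    next
      case False
      have "c g \<noteq> Empty" using False f g isoF dc[OF e] unfolding Cf_def by auto
      thus ?thesis using comp[OF fc e] unfolding Cf_def by auto
    qed
  qed
  have sF: "subcategory C Fb" unfolding subcategory_def
  proof (intro conjI ballI impI)
    show "Fb \<subseteq> carr C" using ic unfolding Fb_def by blast
    show "cid C x \<in> Fb" if "x \<in> cobj C" for x using idi[OF that] unfolding Fb_def by blast
    fix f g assume f: "f \<in> Fb" and g: "g \<in> Fb" and e: "ccod C f = cdom C g"
    have fc: "f \<in> carr C" "g \<in> carr C" using f g ic unfolding Fb_def by blast+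
    show "ccomp C g f \<in> Fb"
    proof (cases "f \<in> iso C \<and> g \<in> iso C")
      case True thus ?thesis using iso_comp[OF C _ _ e] unfolding Fb_def by blast
    next
      case False
      have "d f \<noteq> Star" using False f g isoF dc[OF e] unfolding Fb_def by auto
      thus ?thesis using comp[OF fc e] unfolding Fb_def by auto
    qed
  qed
  have FW: "Fb \<inter> We = {f \<in> carr C. d f = Empty \<and> c f = Empty} \<union> iso C"
    unfolding Fb_def We_def by auto
  have CW: "Cf \<inter> We = {f \<in> carr C. d f = Star \<and> c f = Star} \<union> iso C"
    unfolding Cf_def We_def using ord1 by auto
  have w1: "wfs C Cf (Fb \<inter> We)" unfolding FW Cf_def
  proof (rule wfs_gen[OF C])
    show "{f \<in> carr C. c f \<noteq> Empty} \<subseteq> carr C" "{f \<in> carr C. d f = Empty \<and> c f = Empty} \<subseteq> carr C" by auto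
    show "f \<in> {f \<in> carr C. c f \<noteq> Empty} \<or> f \<in> {f \<in> carr C. d f = Empty \<and> c f = Empty}"
      if "f \<in> carr C" for f using ord1[OF that] that by auto
    fix i p assume i: "i \<in> {f \<in> carr C. c f \<noteq> Empty}" and p: "p \<in> {f \<in> carr C. d f = Empty \<and> c f = Empty}"
    show "lifts C i p" unfolding lifts_def
    proof (intro allI impI)
      fix u v assume a: "u \<in> hom C (cdom C i) (cdom C p) \<and> v \<in> hom C (ccod C i) (ccod C p) \<and> ccomp C p u = ccomp C v i"
      have "rank3 (c i) \<le> rank3 (c p)" using hom_F0[OF Fn] a unfolding c_def by blast
      hence False using i p by (cases "c i") auto
      thus "\<exists>h\<in>hom C (ccod C i) (cdom C p). ccomp C h i = u \<and> ccomp C p h = v" ..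
    qed
  qed
  have w2: "wfs C (Cf \<inter> We) Fb" unfolding CW Fb_def
  proof (rule wfs_gen[OF C])
    show "{f \<in> carr C. d f = Star \<and> c f = Star} \<subseteq> carr C" "{f \<in> carr C. d f \<noteq> Star} \<subseteq> carr C" by auto
    show "f \<in> {f \<in> carr C. d f = Star \<and> c f = Star} \<or> f \<in> {f \<in> carr C. d f \<noteq> Star}"
      if "f \<in> carr C" for f using ord2[OF that] that by auto
    fix i p assume i: "i \<in> {f \<in> carr C. d f = Star \<and> c f = Star}" and p: "p \<in> {f \<in> carr C. d f \<noteq> Star}"
    show "lifts C i p" unfolding lifts_def
    proof (intro allI impI)
      fix u v assume a: "u \<in> hom C (cdom C i) (cdom C p) \<and> v \<in> hom C (ccod C i) (ccod C p) \<and> ccomp C p u = ccomp C v i"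
      have "rank3 (d i) \<le> rank3 (d p)" using hom_F0[OF Fn] a unfolding d_def by blast
      hence False using i p by (cases "d p") auto
      thus "\<exists>h\<in>hom C (ccod C i) (cdom C p). ccomp C h i = u \<and> ccomp C p h = v" ..
    qed
  qed
  have t: "two_out_of_three C We" unfolding two_out_of_three_def
  proof (intro ballI impI conjI)
    fix f g assume fc: "f \<in> carr C" and gc: "g \<in> carr C" and e: "ccod C f = cdom C g"
    note cp = comp[OF fc gc e] and de = dc[OF e]
    show "f \<in> We \<and> g \<in> We \<Longrightarrow> ccomp C g f \<in> We" using sW e unfolding subcategory_def by blast
    show "g \<in> We" if a: "f \<in> We \<and> ccomp C g f \<in> We"
    proof (cases "f \<in> iso C \<and> ccomp C g f \<in> iso C")
      case True thus ?thesis using iso_cancel_right[OF C _ gc e] unfolding We_def by blast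
    next
      case False
      have "d f = c f" "d (ccomp C g f) = c (ccomp C g f)" using a isoF unfolding We_def by blast+
      moreover have "d f = Empty \<or> d f = Star" using False a isoF cp unfolding We_def by auto
      ultimately show ?thesis using cp de gc unfolding We_def by auto
    qed
    show "f \<in> We" if a: "g \<in> We \<and> ccomp C g f \<in> We"
    proof (cases "g \<in> iso C \<and> ccomp C g f \<in> iso C")
      case True thus ?thesis using iso_cancel_left[OF C fc _ e] unfolding We_def by blast
    next
      case False
      have "d g = c g" "d (ccomp C g f) = c (ccomp C g f)" using a isoF unfolding We_def by blast+
      moreover have "d g = Empty \<or> d g = Star" using False a isoF cp de unfolding We_def by auto
      ultimately show ?thesis using cp de fc unfolding We_def by auto
    qed
  qed
  have "model_structure C We Cf Fb" unfolding model_structure_def using sW sC sF w1 w2 t by blast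
  thus ?thesis unfolding W We_def Cf_def Fb_def d_def c_def .
qed

end
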